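(* Let $\ell:\mathcal{R}\to\mathbb{R}^{\mathcal{Y}}_+$ be a discrete loss and $L:\mathbb{R}^d\to\mathbb{R}^{\mathcal{Y}}_+$ a minimizable loss. Then $L$ embeds $\ell$ if and only if their Bayes risks coincide: $\underline{L}(p)=\underline{\ell}(p)$ for all $p\in\Delta_{\mathcal{Y}}$.
   Context: $\mathcal{Y}$ is a finite label set, $\Delta_{\mathcal{Y}}$ the simplex, $\mathbb{R}^{\mathcal{Y}}_+$ the nonnegative orthant. For a loss $L:\mathcal{R}\to\mathbb{R}^{\mathcal{Y}}_+$, the Bayes risk is $\underline{L}(p)=\inf_{r\in\mathcal{R}}\langle p,L(r)\rangle$. Discrete: $\mathcal{R}$ finite. Minimizable: the infimum is attained for every $p$; then $\mathrm{prop}[L](p)=\arg\min_r\langle p,L(r)\rangle$. $\mathcal{S}$ is representative for $L$ if $\mathrm{prop}[L](p)\cap\mathcal{S}\neq\emptyset$ for all $p$. $L$ embeds $\ell$ if there exist a representative set $\mathcal{S}$ for $\ell$ and an injective $\varphi:\mathcal{S}\to\mathbb{R}^d$ with (i) $L(\varphi(r))=\ell(r)$ for $r\in\mathcal{S}$ and (ii) $r\in\mathrm{prop}[\ell](p)\iff\varphi(r)\in\mathrm{prop}[L](p)$ for all $p$, $r\in\mathcal{S}$. *)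

theory Defs
  imports "HOL-Analysis.Analysis"
begin

definition prob_simplex :: "('y::finite \<Rightarrow> real) set" where
  "prob_simplex = {p. (\<forall>y. 0 \<le> p y) \<and> sum p UNIV = 1}"

definition nonneg_loss :: "('r \<Rightarrow> 'y::finite \<Rightarrow> real) \<Rightarrow> bool" where
  "nonneg_loss L \<longleftrightarrow> (\<forall>r y. 0 \<le> L r y)"

definition exp_loss :: "('y::finite \<Rightarrow> real) \<Rightarrow> ('r \<Rightarrow> 'y \<Rightarrow> real) \<Rightarrow> 'r \<Rightarrow> real" where
  "exp_loss p L r = (\<Sum>y\<in>UNIV. p y * L r y)"

definition bayes_risk :: "('r \<Rightarrow> 'y::finite \<Rightarrow> real) \<Rightarrow> ('y \<Rightarrow> real) \<Rightarrow> real" where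
  "bayes_risk L p = (INF r. exp_loss p L r)"

definition minimizable :: "('r \<Rightarrow> 'y::finite \<Rightarrow> real) \<Rightarrow> bool" where
  "minimizable L \<longleftrightarrow> (\<forall>p\<in>prob_simplex. \<exists>r. \<forall>r'. exp_loss p L r \<le> exp_loss p L r')"

definition prop_set :: "('r \<Rightarrow> 'y::finite \<Rightarrow> real) \<Rightarrow> ('y \<Rightarrow> real) \<Rightarrow> 'r set" where
  "prop_set L p = {r. \<forall>r'. exp_loss p L r \<le> exp_loss p L r'}"

definition representative :: "'r set \<Rightarrow> ('r \<Rightarrow> 'y::finite \<Rightarrow> real) \<Rightarrow> bool" where
  "representative S L \<longleftrightarrow> (\<forall>p\<in>prob_simplex. prop_set L p \<inter> S \<noteq> {})"

definition embeds :: "('u \<Rightarrow> 'y::finite \<Rightarrow> real) \<Rightarrow> ('r \<Rightarrow> 'y \<Rightarrow> real) \<Rightarrow> bool" where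
  "embeds L ell \<longleftrightarrow> (\<exists>S (\<phi>::'r \<Rightarrow> 'u). representative S ell \<and> inj_on \<phi> S \<and>
      (\<forall>r\<in>S. L (\<phi> r) = ell r) \<and>
      (\<forall>p\<in>prob_simplex. \<forall>r\<in>S. r \<in> prop_set ell p \<longleftrightarrow> \<phi> r \<in> prop_set L p))"

end

theory Submission
  imports Defs
begin

lemma inf_min_eq:
  fixes f :: "'a \<Rightarrow> real"
  assumes "\<forall>r'. f r \<le> f r'"
  shows "(INF r. f r) = f r"
  using assms by (intro cInf_eq_minimum) auto

lemma inf_le_any:
  fixes f :: "'a \<Rightarrow> real"
  assumes "\<exists>r0. \<forall>r'. f r0 \<le> f r'"
  shows "(INF r. f r) \<le> f r"
proof -
  from assms obtain r0 where "\<forall>r'. f r0 \<le> f r'" by blast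
  hence "bdd_below (range f)" by (auto intro: bdd_belowI)
  thus ?thesis by (rule cINF_lower) simp
qed

lemma minimizer_iff:
  fixes f :: "'a \<Rightarrow> real"
  assumes "\<exists>r0. \<forall>r'. f r0 \<le> f r'"
  shows "(\<forall>r'. f r \<le> f r') \<longleftrightarrow> f r \<le> (INF r. f r)"
proof
  assume "\<forall>r'. f r \<le> f r'"
  hence "(INF r. f r) = f r" by (rule inf_min_eq)
  thus "f r \<le> (INF r. f r)" by simp
next
  assume h: "f r \<le> (INF r. f r)"
  show "\<forall>r'. f r \<le> f r'" using h inf_le_any[OF assms] by (meson order_trans)
qed

lemma finite_minimizer:
  fixes f :: "'a::finite \<Rightarrow> real"
  shows "\<exists>r0. \<forall>r'. f r0 \<le> f r'"
proof -
  have "finite (range f)" "range f \<noteq> {}" by auto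
  hence "Min (range f) \<in> range f" by (rule Min_in)
  then obtain r0 where "f r0 = Min (range f)" by (metis imageE)
  thus ?thesis by (metis Min_le finite UNIV_I finite_imageI image_eqI)
qed

lemma finite_baire:
  fixes C :: "'a \<Rightarrow> ('b::topological_space) set"
  assumes "finite F" "\<forall>r\<in>F. closed (C r)"
  shows "open W \<Longrightarrow> W \<noteq> {} \<Longrightarrow> W \<subseteq> (\<Union>r\<in>F. C r) \<Longrightarrow>
     \<exists>r\<in>F. \<exists>V. open V \<and> V \<noteq> {} \<and> V \<subseteq> W \<and> V \<subseteq> C r"
  using assms
proof (induction F arbitrary: W rule: finite_induct)
  case empty
  then show ?case by auto
next
  case (insert a F)
  show ?case
  proof (cases "W \<subseteq> C a")
    case True
    then show ?thesis using insert.prems by blast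
  next
    case False
    have "open (W - C a)" using insert.prems by (intro open_Diff) auto
    moreover have "W - C a \<noteq> {}" using False by blast
    moreover have "W - C a \<subseteq> (\<Union>r\<in>F. C r)" using insert.prems by blast
    ultimately obtain r V where "r \<in> F" "open V" "V \<noteq> {}" "V \<subseteq> W - C a" "V \<subseteq> C r"
      using insert.IH[of "W - C a"] insert.prems(4) by auto
    then show ?thesis by blast
  qed
qed

theorem proposition2:
  fixes ell :: "'r::finite \<Rightarrow> 'y::finite \<Rightarrow> real"
    and L :: "real^'d \<Rightarrow> 'y \<Rightarrow> real"
  assumes "nonneg_loss ell"
    and "nonneg_loss L"
    and "minimizable L"
  shows "embeds L ell \<longleftrightarrow> (\<forall>p\<in>prob_simplex. bayes_risk L p = bayes_risk ell p)"
proof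
  assume "embeds L ell"
  then obtain S and \<phi> :: "'r \<Rightarrow> real^'d" where rep: "representative S ell"
    and eq: "\<forall>r\<in>S. L (\<phi> r) = ell r"
    and pr: "\<forall>p\<in>prob_simplex. \<forall>r\<in>S. r \<in> prop_set ell p \<longleftrightarrow> \<phi> r \<in> prop_set L p"
    unfolding embeds_def by auto
  show "\<forall>p\<in>prob_simplex. bayes_risk L p = bayes_risk ell p"
  proof
    fix p :: "'y \<Rightarrow> real" assume p: "p \<in> prob_simplex"
    then obtain r where r: "r \<in> S" "r \<in> prop_set ell p"
      using rep unfolding representative_def by blast
    hence "\<phi> r \<in> prop_set L p" using pr p by blast
    hence "\<forall>r'. exp_loss p L (\<phi> r) \<le> exp_loss p L r'" unfolding prop_set_def by simp
    hence "bayes_risk L p = exp_loss p L (\<phi> r)"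
      unfolding bayes_risk_def by (rule inf_min_eq)
    also have "\<dots> = exp_loss p ell r" using eq r unfolding exp_loss_def by simp
    also have "\<dots> = bayes_risk ell p"
    proof -
      have "\<forall>r'. exp_loss p ell r \<le> exp_loss p ell r'" using r(2) unfolding prop_set_def by simp
      hence "bayes_risk ell p = exp_loss p ell r" unfolding bayes_risk_def by (rule inf_min_eq)
      thus ?thesis by simp
    qed
    finally show "bayes_risk L p = bayes_risk ell p" .
  qed
next
  assume H: "\<forall>p\<in>prob_simplex. bayes_risk L p = bayes_risk ell p"
  define G where "G = {r. \<exists>u. L u = ell r}"
  have key: "\<exists>r\<in>G. r \<in> prop_set ell p" if p: "p \<in> prob_simplex" for p
  proof -
    define E where "E x v = (\<Sum>y\<in>UNIV. x$y * v y)" for x :: "real^'y" and v :: "'y \<Rightarrow> real"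
    define C where "C r = {x::real^'y. \<forall>r'. E x (ell r) \<le> E x (ell r')}" for r
    define A where "A = {x::real^'y. \<forall>y. 0 < x$y}"
    define D where "D = (\<Union>r\<in>G. C r)"
    have contE: "continuous_on UNIV (\<lambda>x. E x v)" for v
      unfolding E_def by (intro continuous_intros)
    have closedC: "closed (C r)" for r
    proof -
      have "C r = (\<Inter>r'. {x. E x (ell r) \<le> E x (ell r')})" unfolding C_def by auto
      also have "closed \<dots>"
        by (intro closed_INT ballI closed_Collect_le contE)
      finally show ?thesis .
    qed
    have openA: "open A"
    proof -
      have "A = (\<Inter>y\<in>UNIV. {x::real^'y. 0 < x$y})" unfolding A_def by auto
      also have "open \<dots>"
        by (intro open_INT ballI finite open_Collect_less continuous_intros)
      finally show ?thesis .
    qed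
    have cover: "\<exists>r. x \<in> C r" for x
      unfolding C_def using finite_minimizer[of "\<lambda>r. E x (ell r)"] by simp
    have Eshift: "E (x + t *\<^sub>R axis y0 1) w = E x w + t * w y0" for x t y0 w
    proof -
      have "(x + t *\<^sub>R axis y0 1)$y * w y = x$y * w y + (if y = y0 then t * w y else 0)" for y
        by (simp add: axis_def algebra_simps)
      hence "E (x + t *\<^sub>R axis y0 1) w = (\<Sum>y\<in>UNIV. x$y * w y + (if y = y0 then t * w y else 0))"
        unfolding E_def by simp
      also have "\<dots> = E x w + t * w y0" unfolding E_def sum.distrib by (simp add: sum.delta)
      finally show ?thesis .
    qed
    have P: "r \<in> G" if V: "open V" "x0 \<in> V" "V \<subseteq> A" "V \<subseteq> C r" for V x0 r
    proof -
      define s where "s x = (\<Sum>y\<in>UNIV. x$y)" for x :: "real^'y"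
      define q where "q x = (\<lambda>y. x$y / s x)" for x
      have spos: "s x > 0" if "x \<in> A" for x
        unfolding s_def using that unfolding A_def by (intro sum_pos) auto
      have qS: "q x \<in> prob_simplex" if "x \<in> A" for x
      proof -
        have "\<forall>y. 0 \<le> q x y" using that spos[OF that] unfolding q_def A_def
          by (auto intro: less_imp_le)
        moreover have "sum (q x) UNIV = 1"
          unfolding q_def sum_divide_distrib[symmetric] using spos[OF that] unfolding s_def by simp
        ultimately show ?thesis unfolding prob_simplex_def by simp
      qed
      have qE: "exp_loss (q x) l u = E x (l u) / s x" for x and l :: "'b \<Rightarrow> 'y \<Rightarrow> real" and u
        unfolding exp_loss_def q_def E_def sum_divide_distrib by (simp add: algebra_simps)
      have x0A: "x0 \<in> A" using V by blast
      obtain u where u: "\<forall>u'. exp_loss (q x0) L u \<le> exp_loss (q x0) L u'"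
        using assms(3) qS[OF x0A] unfolding minimizable_def by blast
      have brr: "bayes_risk ell (q x) = E x (ell r) / s x" if "x \<in> V" for x
      proof -
        have "x \<in> C r" "x \<in> A" using that V by auto
        hence "\<forall>r'. exp_loss (q x) ell r \<le> exp_loss (q x) ell r'"
          unfolding qE C_def using spos[of x] by (auto intro!: divide_right_mono)
        hence "bayes_risk ell (q x) = exp_loss (q x) ell r" unfolding bayes_risk_def by (rule inf_min_eq)
        thus ?thesis unfolding qE .
      qed
      have ge: "E x (ell r) \<le> E x (L u)" if "x \<in> V" for x
      proof -
        have xA: "x \<in> A" using that V by auto
        have m: "\<exists>r0. \<forall>r'. exp_loss (q x) L r0 \<le> exp_loss (q x) L r'"
          using assms(3) qS[OF xA] unfolding minimizable_def by blast
        have "E x (ell r) / s x = bayes_risk L (q x)" using brr[OF that] H qS[OF xA] by simp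
        also have "\<dots> \<le> exp_loss (q x) L u" unfolding bayes_risk_def by (rule inf_le_any[OF m])
        finally have "E x (ell r) / s x \<le> E x (L u) / s x" unfolding qE .
        thus ?thesis using spos[OF xA] by (simp add: divide_le_cancel)
      qed
      have eq0: "E x0 (ell r) = E x0 (L u)"
      proof -
        have "bayes_risk L (q x0) = exp_loss (q x0) L u" unfolding bayes_risk_def using u by (rule inf_min_eq)
        hence "E x0 (ell r) / s x0 = E x0 (L u) / s x0"
          using brr[OF V(2)] H qS[OF x0A] unfolding qE by simp
        thus ?thesis using spos[OF x0A] by simp
      qed
      obtain e where e: "e > 0" "ball x0 e \<subseteq> V" using V(1,2) open_contains_ball by blast
      have "L u y0 = ell r y0" for y0
      proof -
        define t where "t = e / 2"
        have t: "t > 0" "t < e" using e unfolding t_def by auto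
        have "x0 + t *\<^sub>R axis y0 1 \<in> V" "x0 + (-t) *\<^sub>R axis y0 1 \<in> V"
          using t e(2) by (auto simp: dist_norm)
        from ge[OF this(1)] ge[OF this(2)] eq0 have "t * ell r y0 \<le> t * L u y0" "-t * ell r y0 \<le> -t * L u y0"
          unfolding Eshift by auto
        thus ?thesis using t by (metis mult_le_cancel_left_pos neg_le_iff_le mult_minus_left order_antisym)
      qed
      thus ?thesis unfolding G_def by auto
    qed
    have dense: "x \<in> closure D" if "x \<in> A" for x
      unfolding closure_iff_nhds_not_empty
    proof (intro allI impI)
      fix T S assume ST: "S \<subseteq> T" "open S" "x \<in> S"
      have "open (S \<inter> A)" using ST openA by auto
      moreover have "S \<inter> A \<noteq> {}" using ST that by auto
      moreover have "S \<inter> A \<subseteq> (\<Union>r\<in>UNIV. C r)" using cover by auto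
      ultimately obtain r V where rV: "open V" "V \<noteq> {}" "V \<subseteq> S \<inter> A" "V \<subseteq> C r"
        using finite_baire[of UNIV C "S \<inter> A"] closedC by auto
      then obtain x0 where "x0 \<in> V" by auto
      hence "r \<in> G" using P[of V x0 r] rV by auto
      hence "V \<subseteq> D" using rV unfolding D_def by auto
      thus "D \<inter> T \<noteq> {}" using rV ST \<open>x0 \<in> V\<close> by blast
    qed
    have closedD: "closed D" unfolding D_def using closedC by (intro closed_UN) auto
    have AD: "closure A \<subseteq> D"
      using dense closedD by (intro closure_minimal) (auto simp: closure_closed)
    define pv where "pv = (\<chi> y. p y)"
    define xs where "xs n = pv + inverse (real (Suc n)) *\<^sub>R (\<chi> y. (1::real))" for n
    have "xs \<longlonglongrightarrow> pv + 0 *\<^sub>R (\<chi> y. (1::real))"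
      unfolding xs_def by (intro tendsto_intros LIMSEQ_inverse_real_of_nat)
    hence "xs \<longlonglongrightarrow> pv" by simp
    moreover have "xs n \<in> A" for n
      using p unfolding xs_def A_def pv_def prob_simplex_def
      by (auto intro: add_nonneg_pos)
    ultimately have "pv \<in> closure A" unfolding closure_sequential by blast
    with AD have "pv \<in> D" by auto
    then obtain r where r: "r \<in> G" "pv \<in> C r" unfolding D_def by auto
    have Ep: "E pv (ell r') = exp_loss p ell r'" for r'
      unfolding E_def exp_loss_def pv_def by simp
    hence "r \<in> prop_set ell p" using r(2) unfolding C_def prop_set_def by (simp add: Ep)
    thus ?thesis using r(1) by blast
  qed
  define c where "c r = (SOME r'. ell r' = ell r)" for r
  have c: "ell (c r) = ell r" for r unfolding c_def by (rule someI) simp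
  define S where "S = c ` G"
  define \<phi> where "\<phi> r = (SOME u. L u = ell r)" for r
  have SG: "\<exists>u. L u = ell r" if "r \<in> S" for r
    using that c unfolding S_def G_def by auto
  have \<phi>: "L (\<phi> r) = ell r" if "r \<in> S" for r
    unfolding \<phi>_def using SG[OF that] by (rule someI_ex)
  have injell: "a = b" if ab: "a \<in> S" "b \<in> S" "ell a = ell b" for a b
  proof -
    obtain a0 b0 where "a = c a0" "b = c b0" using ab(1,2) unfolding S_def by blast
    hence "ell a0 = ell b0" using c ab(3) by metis
    thus ?thesis unfolding \<open>a = c a0\<close> \<open>b = c b0\<close> c_def by simp
  qed
  have "representative S ell"
    unfolding representative_def
  proof
    fix p :: "'y \<Rightarrow> real" assume "p \<in> prob_simplex"
    then obtain r where "r \<in> G" "r \<in> prop_set ell p" using key by blast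
    hence "c r \<in> S" "c r \<in> prop_set ell p"
      unfolding S_def prop_set_def exp_loss_def using c by auto
    thus "prop_set ell p \<inter> S \<noteq> {}" by blast
  qed
  moreover have "inj_on \<phi> S"
    by (rule inj_onI) (metis \<phi> injell)
  moreover have "\<forall>p\<in>prob_simplex. \<forall>r\<in>S. r \<in> prop_set ell p \<longleftrightarrow> \<phi> r \<in> prop_set L p"
  proof (intro ballI)
    fix p :: "'y \<Rightarrow> real" and r assume p: "p \<in> prob_simplex" and r: "r \<in> S"
    have m1: "\<exists>r0. \<forall>r'. exp_loss p ell r0 \<le> exp_loss p ell r'" by (rule finite_minimizer)
    have m2: "\<exists>r0. \<forall>r'. exp_loss p L r0 \<le> exp_loss p L r'"
      using assms(3) p unfolding minimizable_def by blast
    have e: "exp_loss p L (\<phi> r) = exp_loss p ell r" using \<phi>[OF r] unfolding exp_loss_def by simp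
    show "r \<in> prop_set ell p \<longleftrightarrow> \<phi> r \<in> prop_set L p"
      unfolding prop_set_def mem_Collect_eq minimizer_iff[OF m1] minimizer_iff[OF m2]
      using H p e unfolding bayes_risk_def by simp
  qed
  ultimately show "embeds L ell" unfolding embeds_def using \<phi> by blast
qed

end
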